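(* Let $H$ be a bigraph and $S$ a non-trivial strong component of $H^+$. If both the envelope $\widehat{S}$ and the envelope $\widehat{S'}$ contain a circuit, then $H$ is not an interval bigraph.
   Context: A bigraph is a bipartite graph $H$ with fixed bipartition $(B,W)$ (black/white colours). $H$ is an interval bigraph if there are intervals $I_v$, $v\in V(H)$, with $xy\in E(H)$ iff $I_x\cap I_y\ne\emptyset$ for $x\in B,y\in W$; equivalently (Hell–Huang) $V(H)$ has a linear ordering with no $a<b<c$ where $a,b$ have the same colour, $c$ the opposite colour, $ac\in E(H)$, $bc\notin E(H)$. The pair-digraph $H^+$ has vertices all ordered pairs $(u,v)$ of distinct vertices of $H$, and arcs $(u,v)\to(u',v)$ whenever $u,v$ have the same colour, $uu'\in E(H)$, $vu'\notin E(H)$, and $(u,v)\to(u,v')$ whenever $u,v$ have different colours, $vv'\in E(H)$, $uv\notin E(H)$. For a vertex set $S$ of $H^+$, $S'=\{(x,y):(y,x)\in S\}$. The envelope $\widehat{R}$ of a set $R$ of ordered pairs is the smallest set of ordered pairs containing $R$ that is closed under transitivity (if $(x,y),(y,z)$ are in it then so is $(x,z)$) and under implication (if $(x,y)$ is in it and $(x,y)\to(x',y')$ in $H^+$ then $(x',y')$ is in it). A circuit in a set $R$ of pairs is a sequence $(x_0,x_1),(x_1,x_2),\dots,(x_{n-1},x_n),(x_n,x_0)$ of elements of $R$ with $n\ge1$. *)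

theory Defs
  imports Complex_Main
begin

text \<open>A bigraph H is given by a vertex set V, the set B of black vertices
(the white vertices are V - B), and a symmetric edge relation E of ordered
pairs; every edge joins a black and a white vertex.\<close>

definition bigraph :: "'a set \<Rightarrow> 'a set \<Rightarrow> ('a \<times> 'a) set \<Rightarrow> bool" where
  "bigraph V B E \<longleftrightarrow> finite V \<and> B \<subseteq> V \<and> E \<subseteq> V \<times> V \<and> sym E \<and>
     (\<forall>(x, y) \<in> E. (x \<in> B \<longleftrightarrow> y \<notin> B))"

definition same_colour :: "'a set \<Rightarrow> 'a \<Rightarrow> 'a \<Rightarrow> bool" where
  "same_colour B x y \<longleftrightarrow> (x \<in> B \<longleftrightarrow> y \<in> B)"

definition interval_bigraph :: "'a set \<Rightarrow> 'a set \<Rightarrow> ('a \<times> 'a) set \<Rightarrow> bool" where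
  "interval_bigraph V B E \<longleftrightarrow>
     (\<exists>l r :: 'a \<Rightarrow> real. (\<forall>v\<in>V. l v \<le> r v) \<and>
        (\<forall>x\<in>B. \<forall>y\<in>V - B. ((x, y) \<in> E \<longleftrightarrow> {l x..r x} \<inter> {l y..r y} \<noteq> {})))"

definition pair_vertices :: "'a set \<Rightarrow> ('a \<times> 'a) set" where
  "pair_vertices V = {(u, v). u \<in> V \<and> v \<in> V \<and> u \<noteq> v}"

definition pair_arc :: "'a set \<Rightarrow> 'a set \<Rightarrow> ('a \<times> 'a) set \<Rightarrow> ('a \<times> 'a) \<Rightarrow> ('a \<times> 'a) \<Rightarrow> bool" where
  "pair_arc V B E p q \<longleftrightarrow> p \<in> pair_vertices V \<and> q \<in> pair_vertices V \<and>
     ((\<exists>u v u'. p = (u, v) \<and> q = (u', v) \<and> same_colour B u v \<and>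
               (u, u') \<in> E \<and> (v, u') \<notin> E) \<or>
      (\<exists>u v v'. p = (u, v) \<and> q = (u, v') \<and> \<not> same_colour B u v \<and>
               (v, v') \<in> E \<and> (u, v) \<notin> E))"

definition pair_arcs :: "'a set \<Rightarrow> 'a set \<Rightarrow> ('a \<times> 'a) set \<Rightarrow> (('a \<times> 'a) \<times> ('a \<times> 'a)) set" where
  "pair_arcs V B E = {(p, q). pair_arc V B E p q}"

definition strong_component :: "'a set \<Rightarrow> 'a set \<Rightarrow> ('a \<times> 'a) set \<Rightarrow> ('a \<times> 'a) set \<Rightarrow> bool" where
  "strong_component V B E S \<longleftrightarrow> S \<noteq> {} \<and> S \<subseteq> pair_vertices V \<and>
     (\<forall>p\<in>S. \<forall>q\<in>S. (p, q) \<in> (pair_arcs V B E)\<^sup>*) \<and>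
     (\<forall>p\<in>S. \<forall>q\<in>pair_vertices V.
        (p, q) \<in> (pair_arcs V B E)\<^sup>* \<and> (q, p) \<in> (pair_arcs V B E)\<^sup>* \<longrightarrow> q \<in> S)"

definition nontrivial_strong_component :: "'a set \<Rightarrow> 'a set \<Rightarrow> ('a \<times> 'a) set \<Rightarrow> ('a \<times> 'a) set \<Rightarrow> bool" where
  "nontrivial_strong_component V B E S \<longleftrightarrow> strong_component V B E S \<and> (\<exists>p\<in>S. \<exists>q\<in>S. p \<noteq> q)"

definition reverse_pairs :: "('a \<times> 'a) set \<Rightarrow> ('a \<times> 'a) set" where
  "reverse_pairs S = {(x, y). (y, x) \<in> S}"

inductive_set envelope :: "'a set \<Rightarrow> 'a set \<Rightarrow> ('a \<times> 'a) set \<Rightarrow> ('a \<times> 'a) set \<Rightarrow> ('a \<times> 'a) set"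
  for V B E R where
  base: "p \<in> R \<Longrightarrow> p \<in> envelope V B E R"
| trans: "(x, y) \<in> envelope V B E R \<Longrightarrow> (y, z) \<in> envelope V B E R \<Longrightarrow> (x, z) \<in> envelope V B E R"
| impl: "p \<in> envelope V B E R \<Longrightarrow> pair_arc V B E p q \<Longrightarrow> q \<in> envelope V B E R"

definition has_circuit :: "('a \<times> 'a) set \<Rightarrow> bool" where
  "has_circuit R \<longleftrightarrow> (\<exists>n::nat. \<exists>x::nat \<Rightarrow> 'a. n \<ge> 1 \<and>
     (\<forall>i<n. (x i, x (Suc i)) \<in> R) \<and> (x n, x 0) \<in> R)"

end

theory Submission
  imports Defs
begin

theorem lemma4p1:
  fixes V B :: "'a set" and E :: "('a \<times> 'a) set" and S :: "('a \<times> 'a) set"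
  assumes "bigraph V B E"
    and "nontrivial_strong_component V B E S"
    and "has_circuit (envelope V B E S)"
    and "has_circuit (envelope V B E (reverse_pairs S))"
  shows "\<not> interval_bigraph V B E"
proof
  assume "interval_bigraph V B E"
  then obtain l r :: "'a \<Rightarrow> real" where lr: "\<forall>v\<in>V. l v \<le> r v"
    and iv: "\<forall>x\<in>B. \<forall>y\<in>V - B. ((x, y) \<in> E \<longleftrightarrow> {l x..r x} \<inter> {l y..r y} \<noteq> {})"
    unfolding interval_bigraph_def by blast
  have bg: "finite V" "B \<subseteq> V" "E \<subseteq> V \<times> V" "sym E" "\<forall>(x, y) \<in> E. (x \<in> B \<longleftrightarrow> y \<notin> B)"
    using assms(1) unfolding bigraph_def by auto
  have edge: "(x, y) \<in> E \<longleftrightarrow> (l x \<le> r y \<and> l y \<le> r x)"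
    if "x \<in> V" "y \<in> V" "\<not> same_colour B x y" for x y
  proof (cases "x \<in> B")
    case True
    then have "y \<in> V - B" using that unfolding same_colour_def by auto
    then have "(x, y) \<in> E \<longleftrightarrow> {l x..r x} \<inter> {l y..r y} \<noteq> {}" using iv True by blast
    also have "\<dots> \<longleftrightarrow> (l x \<le> r y \<and> l y \<le> r x)" using lr that(1,2) by auto
    finally show ?thesis .
  next
    case False
    then have "y \<in> B" "x \<in> V - B" using that unfolding same_colour_def by auto
    then have "(y, x) \<in> E \<longleftrightarrow> {l y..r y} \<inter> {l x..r x} \<noteq> {}" using iv by blast
    also have "\<dots> \<longleftrightarrow> (l x \<le> r y \<and> l y \<le> r x)" using lr that(1,2) by auto
    also have "(y, x) \<in> E \<longleftrightarrow> (x, y) \<in> E" using bg(4) unfolding sym_def by blast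
    finally show ?thesis by simp
  qed
  have opp: "\<not> same_colour B x y" if "(x, y) \<in> E" for x y
    using bg(5) that unfolding same_colour_def by auto
  obtain f :: "'a \<Rightarrow> nat" and n where f: "inj_on f V"
    using finite_imp_inj_to_nat_seg[OF bg(1)] by blast
  define lt where "lt x y \<longleftrightarrow> x \<in> V \<and> y \<in> V \<and> (r x < r y \<or> (r x = r y \<and> f x < f y))" for x y
  have lt_trans: "lt x z" if "lt x y" "lt y z" for x y z
    using that unfolding lt_def by auto
  have lt_irr: "\<not> lt x x" for x unfolding lt_def by auto
  have lt_tot: "lt x y \<or> lt y x" if "x \<in> V" "y \<in> V" "x \<noteq> y" for x y
    using that f unfolding lt_def inj_on_def by (metis linorder_neqE_nat linorder_neqE_linordered_idom)
  have lt_r: "r x \<le> r y" if "lt x y" for x y using that unfolding lt_def by auto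
  define R where "R = {(x, y). lt x y}"
  have closed: "q \<in> R" if "p \<in> R" "pair_arc V B E p q" for p q
  proof -
    from that(2) have pv: "p \<in> pair_vertices V" "q \<in> pair_vertices V" and
      cases: "(\<exists>u v u'. p = (u, v) \<and> q = (u', v) \<and> same_colour B u v \<and>
               (u, u') \<in> E \<and> (v, u') \<notin> E) \<or>
      (\<exists>u v v'. p = (u, v) \<and> q = (u, v') \<and> \<not> same_colour B u v \<and>
               (v, v') \<in> E \<and> (u, v) \<notin> E)"
      unfolding pair_arc_def by auto
    from cases show ?thesis
    proof
      assume "\<exists>u v u'. p = (u, v) \<and> q = (u', v) \<and> same_colour B u v \<and>
               (u, u') \<in> E \<and> (v, u') \<notin> E"
      then obtain u v u' where h: "p = (u, v)" "q = (u', v)" "same_colour B u v"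
        "(u, u') \<in> E" "(v, u') \<notin> E" by blast
      have V: "u \<in> V" "v \<in> V" "u' \<in> V" "u' \<noteq> v" using pv h unfolding pair_vertices_def by auto
      have luv: "lt u v" using that(1) h R_def by auto
      have o1: "\<not> same_colour B u u'" using opp h(4) .
      have o2: "\<not> same_colour B v u'" using o1 h(3) unfolding same_colour_def by auto
      have e1: "l u \<le> r u' \<and> l u' \<le> r u" using edge[OF V(1) V(3) o1] h(4) by simp
      have e2: "\<not> (l v \<le> r u' \<and> l u' \<le> r v)" using edge[OF V(2) V(3) o2] h(5) by simp
      have "lt u' v"
      proof (rule ccontr)
        assume "\<not> lt u' v"
        then have "lt v u'" using lt_tot V by blast
        then have "r v \<le> r u'" by (rule lt_r)
        moreover have "r u \<le> r v" using lt_r luv .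
        ultimately show False using e1 e2 lr V by force
      qed
      then show ?thesis using h R_def by simp
    next
      assume "\<exists>u v v'. p = (u, v) \<and> q = (u, v') \<and> \<not> same_colour B u v \<and>
               (v, v') \<in> E \<and> (u, v) \<notin> E"
      then obtain u v v' where h: "p = (u, v)" "q = (u, v')" "\<not> same_colour B u v"
        "(v, v') \<in> E" "(u, v) \<notin> E" by blast
      have V: "u \<in> V" "v \<in> V" "v' \<in> V" "u \<noteq> v'" using pv h unfolding pair_vertices_def by auto
      have luv: "lt u v" using that(1) h R_def by auto
      have o1: "\<not> same_colour B v v'" using opp h(4) .
      have e1: "l v \<le> r v' \<and> l v' \<le> r v" using edge[OF V(2) V(3) o1] h(4) by simp
      have e2: "\<not> (l u \<le> r v \<and> l v \<le> r u)" using edge[OF V(1) V(2) h(3)] h(5) by simp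
      have "lt u v'"
      proof (rule ccontr)
        assume "\<not> lt u v'"
        then have "lt v' u" using lt_tot V by blast
        then have "r v' \<le> r u" by (rule lt_r)
        moreover have "r u \<le> r v" using lt_r luv .
        ultimately show False using e1 e2 lr V by force
      qed
      then show ?thesis using h R_def by simp
    qed
  qed
  have reach: "q \<in> R" if "(p, q) \<in> (pair_arcs V B E)\<^sup>*" "p \<in> R" for p q
    using that
  proof (induction rule: rtrancl_induct)
    case base then show ?case .
  next
    case (step y z) then show ?case using closed unfolding pair_arcs_def by auto
  qed
  have env: "envelope V B E T \<subseteq> R" if "T \<subseteq> R" for T
  proof
    fix p assume "p \<in> envelope V B E T"
    then show "p \<in> R"
    proof (induction rule: envelope.induct)
      case (base p) then show ?case using that by auto
    next
      case (trans x y z) then show ?case using lt_trans unfolding R_def by auto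
    next
      case (impl p q) then show ?case using closed by auto
    qed
  qed
  have nocirc: "\<not> has_circuit T" if "T \<subseteq> R" for T
  proof
    assume "has_circuit T"
    then obtain m and x :: "nat \<Rightarrow> 'a" where m: "m \<ge> 1" "\<forall>i<m. (x i, x (Suc i)) \<in> T"
      "(x m, x 0) \<in> T" unfolding has_circuit_def by blast
    have "\<forall>i<m. lt (x i) (x (Suc i))" using m(2) that R_def by auto
    have "lt (x 0) (x (Suc i))" if "i < m" for i
      using that
    proof (induction i)
      case 0 then show ?case using \<open>\<forall>i<m. lt (x i) (x (Suc i))\<close> by auto
    next
      case (Suc i) then show ?case using \<open>\<forall>i<m. lt (x i) (x (Suc i))\<close> lt_trans by auto
    qed
    from this[of "m - 1"] m(1) have "lt (x 0) (x m)" by simp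
    moreover have "lt (x m) (x 0)" using m(3) that R_def by auto
    ultimately show False using lt_trans lt_irr by blast
  qed
  have sc: "strong_component V B E S" using assms(2) unfolding nontrivial_strong_component_def by auto
  then obtain p0 where p0: "p0 \<in> S" unfolding strong_component_def by auto
  have SV: "S \<subseteq> pair_vertices V" using sc unfolding strong_component_def by auto
  have conn: "\<forall>p\<in>S. \<forall>q\<in>S. (p, q) \<in> (pair_arcs V B E)\<^sup>*" using sc unfolding strong_component_def by auto
  show False
  proof (cases "p0 \<in> R")
    case True
    then have "S \<subseteq> R" using reach conn p0 by blast
    then show False using nocirc env assms(3) by blast
  next
    case False
    have "reverse_pairs S \<subseteq> R"
    proof
      fix q assume "q \<in> reverse_pairs S"
      then obtain c d where q: "q = (c, d)" "(d, c) \<in> S" unfolding reverse_pairs_def by auto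
      have "(d, c) \<notin> R" using reach conn p0 q False by blast
      moreover have "c \<in> V" "d \<in> V" "c \<noteq> d" using SV q unfolding pair_vertices_def by auto
      ultimately show "q \<in> R" using lt_tot q R_def by auto
    qed
    then show False using nocirc env assms(4) by blast
  qed
qed

end
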